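(* For $k\in\mathbb{N}$ and $s\in\mathbb{N}_0$ let \[ C_{s,k}:=\sum_{m=0}^{2s}(-1)^m\binom{2k+2s}{m}S(2k+2s-m,2k)\,k^m, \] where $S(n,m)$ denote the Stirling numbers of the second kind. Then for every $k\in\mathbb{N}$ and every $t$ with $|t|<1/k$, \[ \sum_{s=0}^{\infty}C_{s,k}\,t^{2s+2k}=\prod_{j=1}^{k}\frac{t^2}{1-j^2t^2}. \]
   Context: $S(n,m)$ is the Stirling number of the second kind (number of partitions of an $n$-element set into $m$ nonempty blocks), with $S(n,m)=0$ if $n<m$. *)

theory Defs
  imports "HOL-Analysis.Analysis" "HOL-Combinatorics.Stirling"
begin

definition C_coeff :: "nat \<Rightarrow> nat \<Rightarrow> int" where
  "C_coeff s k = (\<Sum>m\<in>{0..2 * s}. (-1) ^ m * int ((2 * k + 2 * s) choose m)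
                    * int (Stirling (2 * k + 2 * s - m) (2 * k)) * int k ^ m)"

end

theory Submission imports Defs begin

definition F :: "nat \<Rightarrow> nat \<Rightarrow> int" where
  "F n r = (\<Sum>i\<le>r. (-1)^(r+i) * int (r choose i) * int i ^ n)"

lemma F_Suc_aux:
  "F n (Suc r) = - F n r + (\<Sum>j\<le>r. (-1)^(r+j) * int (r choose j) * int (Suc j) ^ n)"
proof -
  have a: "F n (Suc r) = (-1)^(Suc r) * 0 ^ n
      + (\<Sum>j\<le>r. (-1)^(r+j) * int (Suc r choose Suc j) * int (Suc j) ^ n)"
    unfolding F_def by (subst sum.atMost_Suc_shift) simp
  have b: "(\<Sum>j\<le>r. (-1)^(r+j) * int (Suc r choose Suc j) * int (Suc j) ^ n)
     = (\<Sum>j\<le>r. (-1)^(r+j) * int (r choose Suc j) * int (Suc j) ^ n)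
     + (\<Sum>j\<le>r. (-1)^(r+j) * int (r choose j) * int (Suc j) ^ n)"
    by (simp add: sum.distrib[symmetric] algebra_simps)
  have c: "(-1)^(Suc r) * 0 ^ n + (\<Sum>j\<le>r. (-1)^(r+j) * int (r choose Suc j) * int (Suc j) ^ n)
     = - (\<Sum>i\<le>Suc r. (-1)^(r+i) * int (r choose i) * int i ^ n)"
    by (subst sum.atMost_Suc_shift) (simp add: sum_negf[symmetric])
  have d: "(\<Sum>i\<le>Suc r. (-1)^(r+i) * int (r choose i) * int i ^ n) = F n r"
    unfolding F_def by simp
  show ?thesis using a b c d by linarith
qed

lemma neg1_pow_add_diff: "i \<le> r \<Longrightarrow> (-1::int)^(r+i) = (-1)^(r-i)"
proof -
  assume "i \<le> r"
  then have "r + i = (r - i) + 2 * i" by simp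
  then have "(-1::int)^(r+i) = (-1)^(r-i) * ((-1)^2)^i" by (simp only: power_add power_mult)
  then show ?thesis by simp
qed

lemma stirling_explicit: "int (fact r) * int (Stirling n r) = F n r"
proof (induction n arbitrary: r)
  case 0
  have "F 0 r = (\<Sum>i\<le>r. int (r choose i) * 1 ^ i * (-1)^(r-i))"
    unfolding F_def by (intro sum.cong refl) (simp add: neg1_pow_add_diff)
  also have "\<dots> = (1 + (-1)) ^ r" by (subst binomial_ring) simp
  finally show ?case by (cases r) auto
next
  case (Suc n)
  show ?case
  proof (cases r)
    case 0
    then show ?thesis by (simp add: F_def)
  next
    case (Suc r')
    have "F (Suc n) (Suc r') = (\<Sum>j\<le>r'. (-1)^(r'+j) * (int (Suc r') * int (r' choose j)) * int (Suc j) ^ n)"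
    proof -
      have e: "(-1)^(Suc r'+Suc j) * int (Suc r' choose Suc j) * int (Suc j) ^ Suc n =
         (-1)^(r'+j) * (int (Suc r') * int (r' choose j)) * int (Suc j) ^ n" for j
      proof -
        have e: "int (Suc j) * int (Suc r' choose Suc j) = int (Suc r') * int (r' choose j)"
          using Suc_times_binomial[of j r'] by (metis of_nat_mult)
        show ?thesis by (simp only: e[symmetric] power_Suc) (simp add: mult_ac)
      qed
      show ?thesis unfolding F_def by (subst sum.atMost_Suc_shift) (simp only: e, simp)
    qed
    also have "\<dots> = int (Suc r') * (F n (Suc r') + F n r')"
      by (simp add: F_Suc_aux sum_distrib_left mult_ac)
    also have "\<dots> = int (fact (Suc r')) * int (Stirling (Suc n) (Suc r'))"
      using Suc.IH[of r'] Suc.IH[of "Suc r'"] by (simp add: algebra_simps)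
    finally show ?thesis using Suc by simp
  qed
qed


definition Esum :: "nat \<Rightarrow> nat \<Rightarrow> int" where
  "Esum n k = (\<Sum>i\<le>2*k. (-1)^i * int (2*k choose i) * (int i - int k)^n)"

lemma Esum_stirling:
  "Esum n k = int (fact (2*k)) * (\<Sum>m\<le>n. (-1)^m * int (n choose m) * int (Stirling (n-m) (2*k)) * int k^m)"
proof -
  have "int (fact (2*k)) * (\<Sum>m\<le>n. (-1)^m * int (n choose m) * int (Stirling (n-m) (2*k)) * int k^m)
     = (\<Sum>m\<le>n. (-1)^m * int (n choose m) * int k^m * F (n-m) (2*k))"
    by (simp add: sum_distrib_left stirling_explicit[symmetric] mult_ac)
  also have "\<dots> = (\<Sum>m\<le>n. \<Sum>i\<le>2*k. (-1)^i * int (2*k choose i) * (int (n choose m) * (-int k)^m * int i^(n-m)))"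
  proof -
    have h: "(-1::int)^(k*2+i) = (-1)^i" for i
      by (simp only: power_add mult.commute[of k 2] power_mult) simp
    show ?thesis unfolding F_def by (simp add: h sum_distrib_left power_minus[of "int k"] mult_ac)
  qed
  also have "\<dots> = (\<Sum>i\<le>2*k. \<Sum>m\<le>n. (-1)^i * int (2*k choose i) * (int (n choose m) * (-int k)^m * int i^(n-m)))"
    by (rule sum.swap)
  also have "\<dots> = Esum n k"
  proof -
    have b: "(int i - int k)^n = (\<Sum>m\<le>n. int (n choose m) * (- int k)^m * int i^(n-m))" for i
      using binomial_ring[of "- int k" "int i" n] by simp
    show ?thesis unfolding Esum_def b by (simp add: sum_distrib_left)
  qed
  finally show ?thesis by simp
qed

lemma C_E: "int (fact (2*k)) * C_coeff s k = Esum (2 * k + 2 * s) k"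
proof -
  have "C_coeff s k = (\<Sum>m\<le>2 * k + 2 * s. (-1)^m * int ((2 * k + 2 * s) choose m) * int (Stirling (2 * k + 2 * s-m) (2*k)) * int k^m)"
    unfolding C_coeff_def atLeast0AtMost
  proof (rule sum.mono_neutral_left)
    show "\<forall>i\<in>{..2 * k + 2 * s} - {..2 * s}. (-1)^i * int ((2 * k + 2 * s) choose i) * int (Stirling (2 * k + 2 * s - i) (2 * k)) * int k^i = 0"
    proof
      fix i assume "i \<in> {..2 * k + 2 * s} - {..2 * s}"
      then have "2 * k + 2 * s - i < 2 * k" by auto
      then show "(-1)^i * int ((2 * k + 2 * s) choose i) * int (Stirling (2 * k + 2 * s - i) (2 * k)) * int k^i = 0" by simp
    qed
  qed auto
  then show ?thesis by (simp add: Esum_stirling)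
qed

lemma E_small: "n < 2*k \<Longrightarrow> Esum n k = 0"
  by (simp add: Esum_stirling)

lemma E_odd: assumes "odd n" shows "Esum n k = 0"
proof -
  have "Esum n k = (\<Sum>i=0..2*k. (-1)^i * int (2*k choose i) * (int i - int k)^n)"
    unfolding Esum_def atLeast0AtMost ..
  also have "\<dots> = (\<Sum>i=0..2*k. (-1)^(2*k-i) * int (2*k choose (2*k-i)) * (int (2*k-i) - int k)^n)"
    by (subst sum.atLeastAtMost_rev) simp
  also have "\<dots> = (\<Sum>i=0..2*k. - ((-1)^i * int (2*k choose i) * (int i - int k)^n))"
  proof (intro sum.cong refl)
    fix i assume "i \<in> {0..2*k}"
    then have i: "i \<le> 2*k" by simp
    have "(-1::int)^(2*k-i) = (-1)^i"
      using neg1_pow_add_diff[OF i] by (simp add: power_add power_mult)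
    moreover have "(int (2*k-i) - int k)^n = - ((int i - int k)^n)"
      using i assms by (simp add: of_nat_diff power_minus_odd[symmetric])
    moreover have "2*k choose (2*k-i) = 2*k choose i" using i by (simp add: binomial_symmetric[symmetric])
    ultimately show "(-1)^(2*k-i) * int (2*k choose (2*k-i)) * (int (2*k-i) - int k)^n = - ((-1)^i * int (2*k choose i) * (int i - int k)^n)"
      by simp
  qed
  also have "\<dots> = - Esum n k" unfolding Esum_def atLeast0AtMost by (simp add: sum_negf)
  finally show ?thesis by simp
qed


definition Gs :: "nat \<Rightarrow> real \<Rightarrow> real" where
  "Gs k t = (\<Sum>i\<le>2*k. (-1)^i * real (2*k choose i) / (1 - (real i - real k) * t))"

lemma binom_aux: "real (Suc j) * real (2*k+2 choose Suc j) * (real (2*k+1) - real j) = real (2*k+2) * real (2*k+1) * real (2*k choose j)"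
  if "j \<le> 2*k" for j k :: nat
proof -
  have a: "Suc j * (Suc (2*k+1) choose Suc j) = Suc (2*k+1) * ((2*k+1) choose j)"
    by (rule Suc_times_binomial)
  have b: "(2*k+1 - j) * (2*k+1 choose j) = (2*k+1) * (2*k choose j)"
    using binomial_absorb_comp[of "2*k+1" j] by simp
  have a': "real (Suc j) * real (2*k+2 choose Suc j) = real (2*k+2) * real (2*k+1 choose j)"
    using a by (metis of_nat_mult add_2_eq_Suc' Suc_eq_plus1)
  have b': "(real (2*k+1) - real j) * real (2*k+1 choose j) = real (2*k+1) * real (2*k choose j)"
    using b that by (metis of_nat_diff of_nat_mult le_SucI add_2_eq_Suc' Suc_eq_plus1)
  have "real (Suc j) * real (2*k+2 choose Suc j) * (real (2*k+1) - real j)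
      = real (2*k+2) * real (2*k+1 choose j) * (real (2*k+1) - real j)" by (simp only: a')
  also have "\<dots> = real (2*k+2) * ((real (2*k+1) - real j) * real (2*k+1 choose j))" by (simp only: ac_simps)
  also have "\<dots> = real (2*k+2) * (real (2*k+1) * real (2*k choose j))" by (simp only: b')
  finally show ?thesis by (simp only: ac_simps)
qed

lemma Gs_rec:
  assumes "real (Suc k) * \<bar>t\<bar> < 1"
  shows "Gs (Suc k) t * (1 - (real (Suc k))^2 * t^2) = real (2*k+2) * real (2*k+1) * t^2 * Gs k t"
proof -
  define K where "K = real (Suc k)"
  have d: "1 - (real i - K) * t \<noteq> 0" if "i \<le> 2 * Suc k" for i
  proof -
    have "\<bar>real i - K\<bar> \<le> K" using that unfolding K_def by auto
    then have "\<bar>(real i - K) * t\<bar> \<le> K * \<bar>t\<bar>" by (simp add: abs_mult mult_right_mono)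
    then show ?thesis using assms unfolding K_def by auto
  qed
  have split: "(-1)^i * real (2 * Suc k choose i) / (1 - (real i - K) * t) * (1 - K^2 * t^2)
     = (-1)^i * real (2 * Suc k choose i) * (1 + (real i - K) * t)
       + (-1)^i * real (2 * Suc k choose i) * (real i * (real i - 2 * K)) * t^2 / (1 - (real i - K) * t)"
    if "i \<le> 2 * Suc k" for i
    using d[OF that] by (simp add: field_simps) (simp add: algebra_simps power2_eq_square)
  have s1: "(\<Sum>i\<le>2 * Suc k. (-1)^i * real (2 * Suc k choose i) * (1 + (real i - K) * t)) = 0"
  proof -
    have A: "(\<Sum>i\<le>2 * Suc k. (-1)^i * real (2 * Suc k choose i)) = 0"
      by (rule choose_alternating_sum) simp
    have B: "(\<Sum>i\<le>2 * Suc k. (-1)^i * real i * real (2 * Suc k choose i)) = 0"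
      by (rule choose_alternating_linear_sum) simp
    have "(\<Sum>i\<le>2 * Suc k. (-1)^i * real (2 * Suc k choose i) * (1 + (real i - K) * t))
      = (1 - K * t) * (\<Sum>i\<le>2 * Suc k. (-1)^i * real (2 * Suc k choose i))
        + t * (\<Sum>i\<le>2 * Suc k. (-1)^i * real i * real (2 * Suc k choose i))"
      by (simp add: sum_distrib_left sum.distrib[symmetric] algebra_simps)
    then show ?thesis using A B by simp
  qed
  have two_Suc: "2 * Suc k = Suc (2*k+1)" by simp
  have s2: "(\<Sum>i\<le>2 * Suc k. (-1)^i * real (2 * Suc k choose i) * (real i * (real i - 2 * K)) * t^2 / (1 - (real i - K) * t))
      = real (2*k+2) * real (2*k+1) * t^2 * Gs k t"
  proof -
    have "(\<Sum>i\<le>2 * Suc k. (-1)^i * real (2 * Suc k choose i) * (real i * (real i - 2 * K)) * t^2 / (1 - (real i - K) * t))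
       = (\<Sum>j\<le>2*k+1. (-1)^(Suc j) * real (2*k+2 choose Suc j) * (real (Suc j) * (real (Suc j) - 2 * K)) * t^2 / (1 - (real (Suc j) - K) * t))"
      unfolding two_Suc by (subst sum.atMost_Suc_shift) simp
    also have "\<dots> = (\<Sum>j\<le>2*k. (-1)^(Suc j) * real (2*k+2 choose Suc j) * (real (Suc j) * (real (Suc j) - 2 * K)) * t^2 / (1 - (real (Suc j) - K) * t))"
      by (simp add: K_def)
    also have "\<dots> = (\<Sum>j\<le>2*k. real (2*k+2) * real (2*k+1) * t^2 * ((-1)^j * real (2*k choose j) / (1 - (real j - real k) * t)))"
    proof (intro sum.cong refl)
      fix j assume "j \<in> {..2*k}"
      then have j: "j \<le> 2*k" by simp
      have e: "real (Suc j) * (real (Suc j) - 2 * K) = - (real (Suc j) * (real (2*k+1) - real j))"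
        unfolding K_def by (simp add: algebra_simps)
      have f: "real (Suc j) - K = real j - real k" unfolding K_def by simp
      show "(-1)^(Suc j) * real (2*k+2 choose Suc j) * (real (Suc j) * (real (Suc j) - 2 * K)) * t^2 / (1 - (real (Suc j) - K) * t)
          = real (2*k+2) * real (2*k+1) * t^2 * ((-1)^j * real (2*k choose j) / (1 - (real j - real k) * t))"
      proof -
        define D where "D = 1 - (real j - real k) * t"
        have "(-1)^(Suc j) * real (2*k+2 choose Suc j) * (- (real (Suc j) * (real (2*k+1) - real j))) * t^2 / D
            = (-1)^j * (real (Suc j) * real (2*k+2 choose Suc j) * (real (2*k+1) - real j)) * t^2 / D"
          by (simp add: ac_simps)
        also have "\<dots> = (-1)^j * (real (2*k+2) * real (2*k+1) * real (2*k choose j)) * t^2 / D"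
          by (simp only: binom_aux[OF j])
        also have "\<dots> = real (2*k+2) * real (2*k+1) * t^2 * ((-1)^j * real (2*k choose j) / D)"
          by (simp add: ac_simps)
        finally show ?thesis unfolding e f D_def .
      qed
    qed
    also have "\<dots> = real (2*k+2) * real (2*k+1) * t^2 * Gs k t"
      unfolding Gs_def by (simp add: sum_distrib_left)
    finally show ?thesis .
  qed
  have "Gs (Suc k) t * (1 - K^2 * t^2) = (\<Sum>i\<le>2 * Suc k. (-1)^i * real (2 * Suc k choose i) / (1 - (real i - K) * t) * (1 - K^2 * t^2))"
    unfolding Gs_def K_def by (rule sum_distrib_right)
  also have "\<dots> = (\<Sum>i\<le>2 * Suc k. (-1)^i * real (2 * Suc k choose i) * (1 + (real i - K) * t))
       + (\<Sum>i\<le>2 * Suc k. (-1)^i * real (2 * Suc k choose i) * (real i * (real i - 2 * K)) * t^2 / (1 - (real i - K) * t))"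
    by (subst sum.distrib[symmetric], rule sum.cong[OF refl], rule split, simp)
  finally show ?thesis using s1 s2 unfolding K_def by simp
qed


lemma Gs_closed:
  "real k * \<bar>t\<bar> < 1 \<Longrightarrow> Gs k t = fact (2*k) * (\<Prod>j=1..k. t^2 / (1 - (real j)^2 * t^2))"
proof (induction k)
  case 0
  then show ?case by (simp add: Gs_def)
next
  case (Suc k)
  have "real k * \<bar>t\<bar> \<le> real (Suc k) * \<bar>t\<bar>" by (simp add: mult_right_mono)
  then have IH: "Gs k t = fact (2*k) * (\<Prod>j=1..k. t^2 / (1 - (real j)^2 * t^2))"
    using Suc by linarith
  have "(real (Suc k) * \<bar>t\<bar>)^2 < 1"
    using Suc.prems by (simp add: abs_square_less_1)
  then have pos: "1 - (real (Suc k))^2 * t^2 > 0" by (simp add: power_mult_distrib)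
  have "Gs (Suc k) t = real (2*k+2) * real (2*k+1) * t^2 * Gs k t / (1 - (real (Suc k))^2 * t^2)"
    using Gs_rec[OF Suc.prems] pos by (simp add: field_simps)
  also have "\<dots> = fact (2 * Suc k) * (\<Prod>j=1..Suc k. t^2 / (1 - (real j)^2 * t^2))"
    unfolding IH by (simp add: prod.nat_ivl_Suc' fact_Suc field_simps)
  finally show ?case .
qed

lemma Esum_sums:
  assumes "real k * \<bar>t\<bar> < 1"
  shows "(\<lambda>n. real_of_int (Esum n k) * t^n) sums Gs k t"
proof -
  have "(\<lambda>n. (-1)^i * real (2*k choose i) * ((real i - real k) * t)^n) sums ((-1)^i * real (2*k choose i) / (1 - (real i - real k) * t))"
    if "i \<in> {..2*k}" for i
  proof -
    have "\<bar>real i - real k\<bar> \<le> real k" using that by auto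
    then have "\<bar>(real i - real k) * t\<bar> \<le> real k * \<bar>t\<bar>" by (simp add: abs_mult mult_right_mono)
    then have "norm ((real i - real k) * t) < 1" using assms by simp
    from sums_mult[OF geometric_sums[OF this], of "(-1)^i * real (2*k choose i)"]
    show ?thesis by (simp add: divide_inverse)
  qed
  note geo = this
  have eq: "(\<lambda>n. real_of_int (Esum n k) * t^n) = (\<lambda>n. \<Sum>i\<le>2*k. (-1)^i * real (2*k choose i) * ((real i - real k) * t)^n)"
    by (rule ext) (simp add: Esum_def sum_distrib_right sum_distrib_left power_mult_distrib mult_ac)
  show ?thesis unfolding eq Gs_def by (rule sums_sum) (rule geo)
qed

theorem mainTheorem5:
  fixes k :: nat and t :: real
  assumes "k \<ge> 1" and "\<bar>t\<bar> < 1 / real k"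
  shows "(\<lambda>n. real_of_int (C_coeff n k) * t ^ (2 * n + 2 * k)) sums
           (\<Prod>j=1..k. t^2 / (1 - (real j)^2 * t^2))"
proof -
  have kpos: "real k > 0" using assms(1) by simp
  have kt: "real k * \<bar>t\<bar> < 1" using assms(2) kpos by (simp add: field_simps)
  have fpos: "(fact (2*k) :: real) \<noteq> 0" by simp
  define f where "f n = real_of_int (Esum n k) / fact (2*k) * t^n" for n
  have "f sums (Gs k t / fact (2*k))"
    unfolding f_def using sums_divide[OF Esum_sums[OF kt], of "fact (2*k)"] by (simp add: field_simps)
  also have "Gs k t / fact (2*k) = (\<Prod>j=1..k. t^2 / (1 - (real j)^2 * t^2))"
    using Gs_closed[OF kt] fpos by simp
  finally have fs: "f sums (\<Prod>j=1..k. t^2 / (1 - (real j)^2 * t^2))" .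
  define g where "g s = 2 * s + 2 * k" for s
  have sm: "strict_mono g" unfolding g_def by (rule strict_monoI) simp
  have zero: "f n = 0" if "n \<notin> range g" for n
  proof (cases "n < 2 * k \<or> odd n")
    case True
    then show ?thesis unfolding f_def using E_small E_odd by auto
  next
    case False
    then have "n = g ((n - 2*k) div 2)" unfolding g_def by auto
    then show ?thesis using that by auto
  qed
  have "(\<lambda>s. f (g s)) sums (\<Prod>j=1..k. t^2 / (1 - (real j)^2 * t^2))"
    using sums_mono_reindex[of g f, OF sm zero] fs by blast
  moreover have "f (g s) = real_of_int (C_coeff s k) * t ^ (2 * s + 2 * k)" for s
  proof -
    have "real_of_int (Esum (2 * k + 2 * s) k) = fact (2*k) * real_of_int (C_coeff s k)"
      using arg_cong[OF C_E[of k s], of real_of_int] by simp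
    then show ?thesis unfolding f_def g_def using fpos by (simp add: ac_simps)
  qed
  ultimately show ?thesis by simp
qed

end
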